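(* If $G$ is a finite, connected, weakly-cliqued graph with $\chi(G)\ge 3$, then $G$ is trivially power-colorable.
   Context: Graphs are simple and undirected; a $k$-coloring is a proper coloring with colors in $\{0,\dots,k-1\}$. A graph $G$ with $\chi(G)=k$ is weakly-cliqued if every vertex lies in a clique of size $k$. For graphs $(G_i)_{i\in I}$, the product $\times_{i\in I}G_i$ has vertex set $\times_{i\in I}V(G_i)$, with $(u_i)$ adjacent to $(v_i)$ iff $u_iv_i\in E(G_i)$ for all $i$; $G^n$ is the product of $n$ copies of $G$. A coloring $\Phi$ of $\times_{i\in I}G_i$ is trivial if there exist $i^*\in I$ and a proper coloring $\phi$ of $G_{i^*}$ with $\Phi(v)=\phi(v_{i^*})$ for all $v$. A graph $H$ is trivially power-colorable if for every positive integer $n$, every $\chi(H)$-coloring of $H^n$ (viewed as the product of $n$ copies of $H$) is trivial. *)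

theory Defs
  imports "HOL-Library.FuncSet"
begin

definition graph :: "'a set \<Rightarrow> ('a \<Rightarrow> 'a \<Rightarrow> bool) \<Rightarrow> bool" where
  "graph V E \<longleftrightarrow> (\<forall>u v. E u v \<longrightarrow> u \<in> V \<and> v \<in> V \<and> E v u \<and> u \<noteq> v)"

definition proper_coloring :: "'a set \<Rightarrow> ('a \<Rightarrow> 'a \<Rightarrow> bool) \<Rightarrow> ('a \<Rightarrow> nat) \<Rightarrow> bool" where
  "proper_coloring V E c \<longleftrightarrow> (\<forall>u\<in>V. \<forall>v\<in>V. E u v \<longrightarrow> c u \<noteq> c v)"

definition k_coloring :: "'a set \<Rightarrow> ('a \<Rightarrow> 'a \<Rightarrow> bool) \<Rightarrow> nat \<Rightarrow> ('a \<Rightarrow> nat) \<Rightarrow> bool" where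
  "k_coloring V E k c \<longleftrightarrow> proper_coloring V E c \<and> (\<forall>v\<in>V. c v < k)"

definition chromatic_number :: "'a set \<Rightarrow> ('a \<Rightarrow> 'a \<Rightarrow> bool) \<Rightarrow> nat" where
  "chromatic_number V E = (LEAST k. \<exists>c. k_coloring V E k c)"

definition is_clique :: "'a set \<Rightarrow> ('a \<Rightarrow> 'a \<Rightarrow> bool) \<Rightarrow> 'a set \<Rightarrow> bool" where
  "is_clique V E K \<longleftrightarrow> K \<subseteq> V \<and> (\<forall>u\<in>K. \<forall>v\<in>K. u \<noteq> v \<longrightarrow> E u v)"

definition weakly_cliqued :: "'a set \<Rightarrow> ('a \<Rightarrow> 'a \<Rightarrow> bool) \<Rightarrow> bool" where
  "weakly_cliqued V E \<longleftrightarrow>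
     (\<forall>v\<in>V. \<exists>K. is_clique V E K \<and> v \<in> K \<and> finite K \<and> card K = chromatic_number V E)"

definition connected_graph :: "'a set \<Rightarrow> ('a \<Rightarrow> 'a \<Rightarrow> bool) \<Rightarrow> bool" where
  "connected_graph V E \<longleftrightarrow> V \<noteq> {} \<and> (\<forall>u\<in>V. \<forall>v\<in>V. E\<^sup>*\<^sup>* u v)"

definition power_verts :: "'a set \<Rightarrow> nat \<Rightarrow> (nat \<Rightarrow> 'a) set" where
  "power_verts V n = ({0..<n} \<rightarrow>\<^sub>E V)"

definition power_edges :: "('a \<Rightarrow> 'a \<Rightarrow> bool) \<Rightarrow> nat \<Rightarrow> (nat \<Rightarrow> 'a) \<Rightarrow> (nat \<Rightarrow> 'a) \<Rightarrow> bool" where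
  "power_edges E n x y \<longleftrightarrow> (\<forall>i<n. E (x i) (y i))"

definition trivial_power_coloring ::
  "'a set \<Rightarrow> ('a \<Rightarrow> 'a \<Rightarrow> bool) \<Rightarrow> nat \<Rightarrow> ((nat \<Rightarrow> 'a) \<Rightarrow> nat) \<Rightarrow> bool" where
  "trivial_power_coloring V E n \<Phi> \<longleftrightarrow>
     (\<exists>i<n. \<exists>\<phi>. proper_coloring V E \<phi> \<and> (\<forall>x\<in>power_verts V n. \<Phi> x = \<phi> (x i)))"

definition trivially_power_colorable :: "'a set \<Rightarrow> ('a \<Rightarrow> 'a \<Rightarrow> bool) \<Rightarrow> bool" where
  "trivially_power_colorable V E \<longleftrightarrow>
     (\<forall>n\<ge>1. \<forall>\<Phi>. k_coloring (power_verts V n) (power_edges E n) (chromatic_number V E) \<Phi>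
                 \<longrightarrow> trivial_power_coloring V E n \<Phi>)"

end

theory Submission
  imports Defs
begin

definition iclq :: "'a set \<Rightarrow> ('a \<Rightarrow> 'a \<Rightarrow> bool) \<Rightarrow> nat \<Rightarrow> (nat \<Rightarrow> 'a) \<Rightarrow> bool" where
  "iclq V E k p \<longleftrightarrow> (\<forall>s<k. p s \<in> V) \<and> (\<forall>s<k. \<forall>t<k. s \<noteq> t \<longrightarrow> E (p s) (p t))"

definition rconn :: "'a set \<Rightarrow> ('a \<Rightarrow> 'a \<Rightarrow> bool) \<Rightarrow> bool" where
  "rconn V E \<longleftrightarrow> (\<forall>u\<in>V. \<forall>v\<in>V. (\<lambda>x y. x \<in> V \<and> y \<in> V \<and> E x y)\<^sup>*\<^sup>* u v)"

lemma rconn_induct: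
  assumes "rconn V E" "a0 \<in> V" "P a0"
    and "\<And>a a'. a \<in> V \<Longrightarrow> a' \<in> V \<Longrightarrow> E a a' \<Longrightarrow> P a \<Longrightarrow> P a'"
    and "a \<in> V"
  shows "P a"
proof -
  have "(\<lambda>x y. x \<in> V \<and> y \<in> V \<and> E x y)\<^sup>*\<^sup>* a0 a" using assms(1,2,5) unfolding rconn_def by blast
  then show ?thesis
    by (induction rule: rtranclp_induct) (use assms(3,4) in blast)+
qed

lemma inj_onto:
  assumes "inj_on f {..<k}" "\<forall>t<k. f t < (k::nat)"
  shows "f ` {..<k} = {..<k}"
proof -
  have "f ` {..<k} \<subseteq> {..<k}" using assms(2) by auto
  moreover have "card (f ` {..<k}) = card {..<k}" using assms(1) card_image by blast
  ultimately show ?thesis by (metis card_subset_eq finite_lessThan)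
qed

lemma inj_hits:
  assumes "inj_on f {..<k}" "\<forall>t<k. f t < (k::nat)" "\<alpha> < k"
  shows "\<exists>t<k. f t = \<alpha>"
proof -
  have "\<alpha> \<in> f ` {..<k}" using inj_onto[OF assms(1,2)] assms(3) by simp
  then show ?thesis by auto
qed

lemma bij_agree:
  assumes "inj_on f {..<k}" "\<forall>t<k. f t < (k::nat)" "\<forall>t<k. g t < k"
    and "\<forall>s<k. \<forall>t<k. s \<noteq> t \<longrightarrow> f s \<noteq> g t"
    and "s < k"
  shows "f s = g s"
proof -
  obtain t where "t < k" "f t = g s" using inj_hits[OF assms(1,2)] assms(3,5) by blast
  with assms(4,5) show ?thesis by metis
qed

lemma other_idx:
  assumes "2 \<le> (k::nat)"
  shows "\<exists>t'<k. t' \<noteq> t"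
  by (rule exI[of _ "if t = 0 then 1 else 0"]) (use assms in auto)

lemma matrix_lemma:
  fixes d :: "nat \<Rightarrow> nat \<Rightarrow> nat"
  assumes rng: "\<forall>s<k. \<forall>t<k. d s t < k"
    and tr: "\<forall>s<k. \<forall>s'<k. \<forall>t<k. \<forall>t'<k. s \<noteq> s' \<longrightarrow> t \<noteq> t' \<longrightarrow> d s t \<noteq> d s' t'"
  shows "(\<forall>s<k. \<forall>t<k. d s t = d s 0) \<or> (\<forall>s<k. \<forall>t<k. d s t = d 0 t)"
proof (cases "\<forall>s<k. inj_on (d s) {..<k}")
  case True
  have "\<forall>s<k. \<forall>t<k. d s t = d 0 t"
  proof (intro allI impI)
    fix s t assume s: "s < k" and t: "t < k"
    show "d s t = d 0 t"
    proof (cases "s = 0")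
      case True then show ?thesis by simp
    next
      case False
      have k0: "0 < k" using s by simp
      obtain t' where t': "t' < k" "d s t' = d 0 t"
        using inj_hits[of "d s" k "d 0 t"] True s rng t k0 by blast
      have "t' = t"
      proof (rule ccontr)
        assume "t' \<noteq> t"
        then have "d s t' \<noteq> d 0 t" using tr s t t' k0 False by blast
        then show False using t' by simp
      qed
      then show ?thesis using t' by simp
    qed
  qed
  then show ?thesis by blast
next
  case False
  then obtain s0 where s0: "s0 < k" "\<not> inj_on (d s0) {..<k}" by blast
  have R: "d s' t \<noteq> d s t1" if "s < k" "s' < k" "t < k" "t1 < k" "t2 < k" "t1 \<noteq> t2"
     "d s t1 = d s t2" "s' \<noteq> s" for s s' t t1 t2
  proof (cases "t = t1")
    case True
    then have "t \<noteq> t2" using that by simp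
    then show ?thesis using tr that by metis
  next
    case False
    then show ?thesis using tr that by metis
  qed
  define rep where "rep s t \<longleftrightarrow> t < k \<and> (\<exists>t2<k. t \<noteq> t2 \<and> d s t = d s t2)" for s t
  have noninj: "\<exists>t. rep s t" if s: "s < k" for s
  proof (rule ccontr)
    assume nr: "\<not> (\<exists>t. rep s t)"
    have inj: "inj_on (d s) {..<k}"
      using nr unfolding rep_def inj_on_def by auto
    from s0(2) obtain t1 t2 where tt: "t1 < k" "t2 < k" "t1 \<noteq> t2" "d s0 t1 = d s0 t2"
      unfolding inj_on_def by auto
    have "s \<noteq> s0" using inj s0(2) by auto
    have rs: "\<forall>t<k. d s t < k" using rng s by blast
    have "d s0 t1 < k" using rng s0(1) tt(1) by blast
    then obtain t where "t < k" "d s t = d s0 t1" using inj_hits[OF inj rs] by blast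
    then show False using R[of s0 s t t1 t2] s s0 tt \<open>s \<noteq> s0\<close> by blast
  qed
  define \<tau> where "\<tau> s = (SOME t. rep s t)" for s
  have tau: "rep s (\<tau> s)" if "s < k" for s
    unfolding \<tau>_def using noninj[OF that] by (rule someI_ex)
  define \<alpha> where "\<alpha> s = d s (\<tau> s)" for s
  have priv: "d s' t \<noteq> \<alpha> s" if "s < k" "s' < k" "t < k" "s' \<noteq> s" for s s' t
  proof -
    from tau[OF that(1)] obtain t2 where "\<tau> s < k" "t2 < k" "\<tau> s \<noteq> t2" "d s (\<tau> s) = d s t2"
      unfolding rep_def by blast
    then show ?thesis unfolding \<alpha>_def using R[of s s' t "\<tau> s" t2] that by blast
  qed
  have arng: "\<forall>s<k. \<alpha> s < k" unfolding \<alpha>_def using tau rng rep_def by blast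
  have ainj: "inj_on \<alpha> {..<k}"
  proof (rule inj_onI)
    fix s s' assume "s \<in> {..<k}" "s' \<in> {..<k}" "\<alpha> s = \<alpha> s'"
    then show "s = s'" using priv[of s s' "\<tau> s'"] tau[of s'] unfolding \<alpha>_def rep_def by auto
  qed
  have "\<forall>s<k. \<forall>t<k. d s t = d s 0"
  proof (intro allI impI)
    fix s t assume s: "s < k" and t: "t < k"
    have all: "d s u = \<alpha> s" if "u < k" for u
    proof -
      have "d s u < k" using rng s that by blast
      then obtain s' where s': "s' < k" "\<alpha> s' = d s u" using inj_hits[OF ainj arng] by blast
      have "s' = s"
      proof (rule ccontr)
        assume "s' \<noteq> s"
        then have "d s u \<noteq> \<alpha> s'" using priv[of s' s u] s s'(1) that by blast
        then show False using s'(2) by simp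
      qed
      then show ?thesis using s' by simp
    qed
    have "d s 0 = \<alpha> s" using all[of 0] s by simp
    then show "d s t = d s 0" using all[OF t] by simp
  qed
  then show ?thesis by blast
qed

lemma two_factor:
  fixes VA :: "'a set" and EA and VB :: "'b set" and EB and c :: "'a \<Rightarrow> 'b \<Rightarrow> nat"
  assumes k2: "2 \<le> k"
    and rngc: "\<And>a b. a \<in> VA \<Longrightarrow> b \<in> VB \<Longrightarrow> c a b < k"
    and prp: "\<And>a a' b b'. a \<in> VA \<Longrightarrow> a' \<in> VA \<Longrightarrow> b \<in> VB \<Longrightarrow> b' \<in> VB \<Longrightarrow> EA a a' \<Longrightarrow> EB b b' \<Longrightarrow> c a b \<noteq> c a' b'"
    and cA: "\<And>a. a \<in> VA \<Longrightarrow> \<exists>p s. s < k \<and> p s = a \<and> iclq VA EA k p"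
    and cB: "\<And>b. b \<in> VB \<Longrightarrow> \<exists>q t. t < k \<and> q t = b \<and> iclq VB EB k q"
    and connA: "rconn VA EA" and connB: "rconn VB EB"
    and a0: "a0 \<in> VA" and b0: "b0 \<in> VB"
  shows "(\<forall>a\<in>VA. \<forall>b\<in>VB. c a b = c a b0) \<or> (\<forall>a\<in>VA. \<forall>b\<in>VB. c a b = c a0 b)"
proof -
  have oth: "\<exists>t'<k. t' \<noteq> t" for t using other_idx[OF k2] .
  have step1: "(\<forall>t<k. c a (q t) = c a (q 0)) \<or> inj_on (\<lambda>t. c a (q t)) {..<k}"
    if q: "iclq VB EB k q" and a: "a \<in> VA" for q a
  proof -
    obtain p s0 where p: "s0 < k" "p s0 = a" "iclq VA EA k p" using cA[OF a] by blast
    have pV: "p s \<in> VA" if "s < k" for s using p(3) that unfolding iclq_def by blast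
    have qV: "q t \<in> VB" if "t < k" for t using q that unfolding iclq_def by blast
    have pE: "EA (p s) (p s')" if "s < k" "s' < k" "s \<noteq> s'" for s s' using p(3) that unfolding iclq_def by blast
    have qE: "EB (q s) (q s')" if "s < k" "s' < k" "s \<noteq> s'" for s s' using q that unfolding iclq_def by blast
    have M: "(\<forall>s<k. \<forall>t<k. c (p s) (q t) = c (p s) (q 0)) \<or> (\<forall>s<k. \<forall>t<k. c (p s) (q t) = c (p 0) (q t))"
    proof (rule matrix_lemma[where d = "\<lambda>s t. c (p s) (q t)"])
      show "\<forall>s<k. \<forall>t<k. c (p s) (q t) < k" using rngc pV qV by blast
      show "\<forall>s<k. \<forall>s'<k. \<forall>t<k. \<forall>t'<k. s \<noteq> s' \<longrightarrow> t \<noteq> t' \<longrightarrow> c (p s) (q t) \<noteq> c (p s') (q t')"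
      proof (intro allI impI)
        fix s s' t t' assume "s < k" "s' < k" "t < k" "t' < k" "s \<noteq> s'" "t \<noteq> t'"
        then show "c (p s) (q t) \<noteq> c (p s') (q t')" using prp[OF pV pV qV qV pE qE] by blast
      qed
    qed
    then show ?thesis
    proof
      assume "\<forall>s<k. \<forall>t<k. c (p s) (q t) = c (p s) (q 0)"
      then have "\<forall>t<k. c (p s0) (q t) = c (p s0) (q 0)" using p(1) by blast
      then show ?thesis using p(2) by blast
    next
      assume cc: "\<forall>s<k. \<forall>t<k. c (p s) (q t) = c (p 0) (q t)"
      have "inj_on (\<lambda>t. c a (q t)) {..<k}"
      proof (rule inj_onI)
        fix t t' assume t: "t \<in> {..<k}" and t': "t' \<in> {..<k}" and eq: "c a (q t) = c a (q t')"
        show "t = t'"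
        proof (rule ccontr)
          assume ne: "t \<noteq> t'"
          obtain s1 where s1: "s1 < k" "s1 \<noteq> s0" using oth by blast
          have "c (p s0) (q t) \<noteq> c (p s1) (q t')"
            using prp[OF pV[OF p(1)] pV[OF s1(1)] qV qV pE[OF p(1) s1(1)] qE] s1 t t' ne by auto
          moreover have "c (p s1) (q t') = c (p 0) (q t')" "c (p s0) (q t') = c (p 0) (q t')"
            using cc s1 p(1) t' by blast+
          ultimately show False using eq p(2) by metis
        qed
      qed
      then show ?thesis by blast
    qed
  qed
  have step2: "(\<forall>a\<in>VA. \<forall>t<k. c a (q t) = c a0 (q t)) \<or> (\<forall>a\<in>VA. \<forall>t<k. c a (q t) = c a (q 0))"
    if q: "iclq VB EB k q" for q
  proof -
    have qV: "q t \<in> VB" if "t < k" for t using q that unfolding iclq_def by blast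
    have qE: "EB (q s) (q s')" if "s < k" "s' < k" "s \<noteq> s'" for s s' using q that unfolding iclq_def by blast
    define I where "I a \<longleftrightarrow> inj_on (\<lambda>t. c a (q t)) {..<k}" for a
    have rr: "\<forall>t<k. c a (q t) < k" if "a \<in> VA" for a using rngc qV that by blast
    have k0: "0 < k" using k2 by simp
    have edge: "I a = I a'" if a: "a \<in> VA" "a' \<in> VA" "EA a a'" for a a'
    proof -
      have d1: "False" if ia: "I a" and ca': "\<forall>t<k. c a' (q t) = c a' (q 0)"
      proof -
        have "\<forall>t<k. c a (q t) \<noteq> c a' (q 0)"
        proof (intro allI impI)
          fix t assume t: "t < k"
          obtain t' where t': "t' < k" "t' \<noteq> t" using oth by blast
          have "c a (q t) \<noteq> c a' (q t')" using prp[OF a(1,2) qV[OF t] qV[OF t'(1)] a(3) qE[OF t t'(1)]] t'(2) by auto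
          then show "c a (q t) \<noteq> c a' (q 0)" using ca' t'(1) by metis
        qed
        moreover have "c a' (q 0) < k" using rr[OF a(2)] k0 by blast
        ultimately show False using inj_hits[OF ia[unfolded I_def] rr[OF a(1)]] by blast
      qed
      have d2: "False" if ia: "I a'" and ca: "\<forall>t<k. c a (q t) = c a (q 0)"
      proof -
        have "\<forall>t<k. c a' (q t) \<noteq> c a (q 0)"
        proof (intro allI impI)
          fix t assume t: "t < k"
          obtain t' where t': "t' < k" "t' \<noteq> t" using oth by blast
          have "c a (q t') \<noteq> c a' (q t)" using prp[OF a(1,2) qV[OF t'(1)] qV[OF t] a(3) qE[OF t'(1) t]] t'(2) by auto
          then show "c a' (q t) \<noteq> c a (q 0)" using ca t'(1) by metis
        qed
        moreover have "c a (q 0) < k" using rr[OF a(1)] k0 by blast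
        ultimately show False using inj_hits[OF ia[unfolded I_def] rr[OF a(2)]] by blast
      qed
      show ?thesis using step1[OF q a(1)] step1[OF q a(2)] d1 d2 unfolding I_def by blast
    qed
    have uni: "I a = I a0" if "a \<in> VA" for a
      by (rule rconn_induct[OF connA a0, where P = "\<lambda>a. I a = I a0"]) (use edge that in blast)+
    show ?thesis
    proof (cases "I a0")
      case True
      have "\<forall>t<k. c a (q t) = c a0 (q t)" if "a \<in> VA" for a
      proof (rule rconn_induct[OF connA a0, where P = "\<lambda>a. \<forall>t<k. c a (q t) = c a0 (q t)"])
        show "a \<in> VA" by fact
        show "\<forall>t<k. c a0 (q t) = c a0 (q t)" by simp
        fix a1 a2 assume a12: "a1 \<in> VA" "a2 \<in> VA" "EA a1 a2" and ih: "\<forall>t<k. c a1 (q t) = c a0 (q t)"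
        have i1: "I a1" using uni[OF a12(1)] True by simp
        have "c a1 (q t) = c a2 (q t)" if t: "t < k" for t
        proof (rule bij_agree[where f = "\<lambda>t. c a1 (q t)" and g = "\<lambda>t. c a2 (q t)" and k = k, OF _ _ _ _ t])
          show "inj_on (\<lambda>t. c a1 (q t)) {..<k}" using i1 unfolding I_def .
          show "\<forall>t<k. c a1 (q t) < k" using rr[OF a12(1)] .
          show "\<forall>t<k. c a2 (q t) < k" using rr[OF a12(2)] .
          show "\<forall>s<k. \<forall>t<k. s \<noteq> t \<longrightarrow> c a1 (q s) \<noteq> c a2 (q t)"
            using prp[OF a12(1,2) qV qV a12(3) qE] by blast
        qed
        then show "\<forall>t<k. c a2 (q t) = c a0 (q t)" using ih by simp
      qed
      then show ?thesis by blast
    next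
      case False
      have "\<forall>t<k. c a (q t) = c a (q 0)" if "a \<in> VA" for a
        using step1[OF q that] uni[OF that] False unfolding I_def by blast
      then show ?thesis by blast
    qed
  qed
  define CC where "CC b \<longleftrightarrow> (\<forall>a\<in>VA. c a b = c a0 b)" for b
  define CP where "CP b \<longleftrightarrow> (\<forall>a\<in>VA. \<forall>a'\<in>VA. EA a a' \<longrightarrow> c a b \<noteq> c a' b)" for b
  have step3: "CC b \<or> CP b" if b: "b \<in> VB" for b
  proof -
    obtain q t0 where q: "t0 < k" "q t0 = b" "iclq VB EB k q" using cB[OF b] by blast
    have qV: "q t \<in> VB" if "t < k" for t using q(3) that unfolding iclq_def by blast
    have qE: "EB (q s) (q s')" if "s < k" "s' < k" "s \<noteq> s'" for s s' using q(3) that unfolding iclq_def by blast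
    from step2[OF q(3)] show ?thesis
    proof
      assume "\<forall>a\<in>VA. \<forall>t<k. c a (q t) = c a0 (q t)"
      then have "\<forall>a\<in>VA. c a (q t0) = c a0 (q t0)" using q(1) by blast
      then show ?thesis unfolding CC_def using q(2) by blast
    next
      assume cst: "\<forall>a\<in>VA. \<forall>t<k. c a (q t) = c a (q 0)"
      have "CP b" unfolding CP_def
      proof (intro ballI impI)
        fix a a' assume a: "a \<in> VA" "a' \<in> VA" "EA a a'"
        obtain t' where t': "t' < k" "t' \<noteq> t0" using oth by blast
        have "c a (q t0) \<noteq> c a' (q t')" using prp[OF a(1,2) qV[OF q(1)] qV[OF t'(1)] a(3) qE[OF q(1) t'(1)]] t'(2) by auto
        moreover have "c a' (q t') = c a' (q t0)" using cst a(2) t'(1) q(1) by metis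
        ultimately show "c a b \<noteq> c a' b" using q(2) by simp
      qed
      then show ?thesis by blast
    qed
  qed
  obtain p s00 where p: "s00 < k" "p s00 = a0" "iclq VA EA k p" using cA[OF a0] by blast
  have pV: "p s \<in> VA" if "s < k" for s using p(3) that unfolding iclq_def by blast
  have pE: "EA (p s) (p s')" if "s < k" "s' < k" "s \<noteq> s'" for s s' using p(3) that unfolding iclq_def by blast
  have rp: "\<forall>s<k. c (p s) b < k" if "b \<in> VB" for b using rngc pV that by blast
  have k0: "0 < k" using k2 by simp
  have injp: "inj_on (\<lambda>s. c (p s) b) {..<k}" if "CP b" for b
  proof (rule inj_onI)
    fix s s' assume "s \<in> {..<k}" "s' \<in> {..<k}" "c (p s) b = c (p s') b"
    then show "s = s'" using that pE pV unfolding CP_def by blast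
  qed
  have excl: "\<not> (CC b \<and> CP b)" if b: "b \<in> VB" for b
  proof
    assume h: "CC b \<and> CP b"
    obtain s1 where s1: "s1 < k" "s1 \<noteq> s00" using oth by blast
    have "c (p s00) b \<noteq> c (p s1) b" using h pV[OF p(1)] pV[OF s1(1)] pE[OF p(1) s1(1)] s1(2) unfolding CP_def by blast
    moreover have "c (p s00) b = c a0 b" "c (p s1) b = c a0 b" using h pV[OF p(1)] pV[OF s1(1)] unfolding CC_def by blast+
    ultimately show False by simp
  qed
  have edgeB: "CC b = CC b'" if b: "b \<in> VB" "b' \<in> VB" "EB b b'" for b b'
  proof -
    have e1: False if h: "CC b" "CP b'"
    proof -
      have "\<forall>s<k. c (p s) b' \<noteq> c a0 b"
      proof (intro allI impI)
        fix s assume s: "s < k"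
        obtain s' where s': "s' < k" "s' \<noteq> s" using oth by blast
        have "c (p s') b \<noteq> c (p s) b'" using prp[OF pV[OF s'(1)] pV[OF s] b(1,2) pE[OF s'(1) s] b(3)] s'(2) by auto
        moreover have "c (p s') b = c a0 b" using h(1) pV[OF s'(1)] unfolding CC_def by blast
        ultimately show "c (p s) b' \<noteq> c a0 b" by simp
      qed
      moreover have "c a0 b < k" using rngc[OF a0 b(1)] .
      ultimately show False using inj_hits[OF injp[OF h(2)] rp[OF b(2)]] by blast
    qed
    have e2: False if h: "CP b" "CC b'"
    proof -
      have "\<forall>s<k. c (p s) b \<noteq> c a0 b'"
      proof (intro allI impI)
        fix s assume s: "s < k"
        obtain s' where s': "s' < k" "s' \<noteq> s" using oth by blast
        have "c (p s) b \<noteq> c (p s') b'" using prp[OF pV[OF s] pV[OF s'(1)] b(1,2) pE[OF s s'(1)] b(3)] s'(2) by auto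
        moreover have "c (p s') b' = c a0 b'" using h(2) pV[OF s'(1)] unfolding CC_def by blast
        ultimately show "c (p s) b \<noteq> c a0 b'" by simp
      qed
      moreover have "c a0 b' < k" using rngc[OF a0 b(2)] .
      ultimately show False using inj_hits[OF injp[OF h(1)] rp[OF b(1)]] by blast
    qed
    show ?thesis using step3[OF b(1)] step3[OF b(2)] e1 e2 by blast
  qed
  have uniB: "CC b = CC b0" if "b \<in> VB" for b
    by (rule rconn_induct[OF connB b0, where P = "\<lambda>b. CC b = CC b0"]) (use edgeB that in blast)+
  show ?thesis
  proof (cases "CC b0")
    case True
    then have "\<forall>a\<in>VA. \<forall>b\<in>VB. c a b = c a0 b" using uniB unfolding CC_def by blast
    then show ?thesis by blast
  next
    case False
    have cpall: "CP b" if "b \<in> VB" for b using step3[OF that] uniB[OF that] False by blast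
    have "\<forall>a\<in>VA. c a b = c a b0" if "b \<in> VB" for b
    proof (rule rconn_induct[OF connB b0, where P = "\<lambda>b. \<forall>a\<in>VA. c a b = c a b0"])
      show "b \<in> VB" by fact
      show "\<forall>a\<in>VA. c a b0 = c a b0" by simp
      fix b1 b2 assume b12: "b1 \<in> VB" "b2 \<in> VB" "EB b1 b2" and ih: "\<forall>a\<in>VA. c a b1 = c a b0"
      have "c a b1 = c a b2" if a: "a \<in> VA" for a
      proof -
        obtain p' s0 where p': "s0 < k" "p' s0 = a" "iclq VA EA k p'" using cA[OF a] by blast
        have pV': "p' s \<in> VA" if "s < k" for s using p'(3) that unfolding iclq_def by blast
        have pE': "EA (p' s) (p' s')" if "s < k" "s' < k" "s \<noteq> s'" for s s' using p'(3) that unfolding iclq_def by blast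
        have "c (p' s0) b1 = c (p' s0) b2"
        proof (rule bij_agree[where f = "\<lambda>s. c (p' s) b1" and g = "\<lambda>s. c (p' s) b2" and k = k, OF _ _ _ _ p'(1)])
          show "inj_on (\<lambda>s. c (p' s) b1) {..<k}"
          proof (rule inj_onI)
            fix s s' assume "s \<in> {..<k}" "s' \<in> {..<k}" "c (p' s) b1 = c (p' s') b1"
            then show "s = s'" using cpall[OF b12(1)] pE' pV' unfolding CP_def by blast
          qed
          show "\<forall>t<k. c (p' t) b1 < k" using rngc pV' b12 by blast
          show "\<forall>t<k. c (p' t) b2 < k" using rngc pV' b12 by blast
          show "\<forall>s<k. \<forall>t<k. s \<noteq> t \<longrightarrow> c (p' s) b1 \<noteq> c (p' t) b2"
            using prp[OF pV' pV' b12(1,2) pE' b12(3)] by blast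
        qed
        then show ?thesis using p'(2) by simp
      qed
      then show "\<forall>a\<in>VA. c a b2 = c a b0" using ih by metis
    qed
    then show ?thesis by blast
  qed
qed

lemma clique_G:
  assumes "weakly_cliqued V E" "v \<in> V"
  shows "\<exists>p s. s < chromatic_number V E \<and> p s = v \<and> iclq V E (chromatic_number V E) p"
proof -
  let ?k = "chromatic_number V E"
  obtain K where K: "is_clique V E K" "v \<in> K" "finite K" "card K = ?k"
    using assms unfolding weakly_cliqued_def by blast
  obtain e where e: "bij_betw e {0..<?k} K" using ex_bij_betw_nat_finite[OF K(3)] K(4) by metis
  have e': "bij_betw e {..<?k} K" using e by (simp add: lessThan_atLeast0)
  obtain s where s: "s < ?k" "e s = v" using e' K(2) unfolding bij_betw_def by auto
  have "iclq V E ?k e"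
    unfolding iclq_def
  proof (intro conjI allI impI)
    fix s assume "s < ?k" then show "e s \<in> V" using e' K(1) unfolding bij_betw_def is_clique_def by auto
  next
    fix s t assume st: "s < ?k" "t < ?k" "s \<noteq> t"
    then have "e s \<noteq> e t" using e' unfolding bij_betw_def inj_on_def by auto
    moreover have "e s \<in> K" "e t \<in> K" using e' st unfolding bij_betw_def by auto
    ultimately show "E (e s) (e t)" using K(1) unfolding is_clique_def by blast
  qed
  then show ?thesis using s by blast
qed

lemma rconn_G:
  assumes "graph V E" "connected_graph V E"
  shows "rconn V E"
proof -
  have "(\<lambda>x y. x \<in> V \<and> y \<in> V \<and> E x y) = E" using assms(1) unfolding graph_def by blast
  then show ?thesis using assms(2) unfolding rconn_def connected_graph_def by simp
qed

lemma upd_pv: "x \<in> power_verts V n \<Longrightarrow> a \<in> V \<Longrightarrow> x(n := a) \<in> power_verts V (Suc n)"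
  by (auto simp: power_verts_def PiE_iff extensional_def)

lemma upd_pe: "power_edges E n x y \<Longrightarrow> E a b \<Longrightarrow> power_edges E (Suc n) (x(n := a)) (y(n := b))"
  by (auto simp: power_edges_def less_Suc_eq)

lemma restr_pv: "x \<in> power_verts V (Suc n) \<Longrightarrow> x(n := undefined) \<in> power_verts V n"
  by (auto simp: power_verts_def PiE_iff extensional_def)

lemma restr_eq: "(x(n := undefined))(n := x n) = x"
  by simp

lemma pv_clique:
  assumes cl: "\<forall>v\<in>V. \<exists>p s. s < k \<and> p s = v \<and> iclq V E k p"
    and x: "x \<in> power_verts V m" and kpos: "0 < k"
  shows "\<exists>q t. t < k \<and> q t = x \<and> iclq (power_verts V m) (power_edges E m) k q"
proof -
  have ex: "\<forall>j. \<exists>ps. j < m \<longrightarrow> (snd ps < k \<and> fst ps (snd ps) = x j \<and> iclq V E k (fst ps))"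
  proof
    fix j show "\<exists>ps. j < m \<longrightarrow> (snd ps < k \<and> fst ps (snd ps) = x j \<and> iclq V E k (fst ps))"
    proof (cases "j < m")
      case True
      then have "x j \<in> V" using x unfolding power_verts_def by auto
      then obtain p s where "s < k" "p s = x j" "iclq V E k p" using cl by blast
      then show ?thesis by (intro exI[of _ "(p, s)"]) auto
    qed auto
  qed
  obtain F where F: "\<forall>j. j < m \<longrightarrow> (snd (F j) < k \<and> fst (F j) (snd (F j)) = x j \<and> iclq V E k (fst (F j)))"
    using choice[OF ex] by blast
  define P where "P j = fst (F j)" for j
  define S where "S j = snd (F j)" for j
  have PS: "S j < k" "P j (S j) = x j" "iclq V E k (P j)" if "j < m" for j
    using F that unfolding P_def S_def by auto
  define \<sigma> where "\<sigma> j t = (if t = 0 then S j else if t = S j then 0 else t)" for j t :: nat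
  have k0: "0 < k" if "j < m" for j using PS(1)[OF that] by simp
  have \<sigma>k: "\<sigma> j t < k" if "j < m" "t < k" for j t using PS(1)[OF that(1)] that k0[OF that(1)] unfolding \<sigma>_def by auto
  have \<sigma>inj: "\<sigma> j t \<noteq> \<sigma> j t'" if "t \<noteq> t'" for j t t' using that unfolding \<sigma>_def by auto
  define q where "q t = (\<lambda>j. if j < m then P j (\<sigma> j t) else undefined)" for t
  have "q 0 = x"
  proof
    fix j show "q 0 j = x j"
    proof (cases "j < m")
      case True then show ?thesis unfolding q_def \<sigma>_def using PS(2)[OF True] by simp
    next
      case False then show ?thesis using x unfolding q_def power_verts_def by (auto simp: PiE_iff extensional_def)
    qed
  qed
  moreover have "iclq (power_verts V m) (power_edges E m) k q"
    unfolding iclq_def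
  proof (intro conjI allI impI)
    fix t assume t: "t < k"
    have "P j (\<sigma> j t) \<in> V" if "j < m" for j using PS(3)[OF that] \<sigma>k[OF that t] unfolding iclq_def by blast
    then show "q t \<in> power_verts V m" unfolding q_def power_verts_def by (auto simp: PiE_iff extensional_def)
  next
    fix t t' assume tt: "t < k" "t' < k" "t \<noteq> t'"
    have "E (P j (\<sigma> j t)) (P j (\<sigma> j t'))" if "j < m" for j
      using PS(3)[OF that] \<sigma>k[OF that tt(1)] \<sigma>k[OF that tt(2)] \<sigma>inj[OF tt(3)] unfolding iclq_def by blast
    then show "power_edges E m (q t) (q t')" unfolding q_def power_edges_def by auto
  qed
  ultimately show ?thesis using kpos by blast
qed

lemma closed_walks:
  assumes "(E ^^ 2) v v" "(E ^^ 3) v v"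
  shows "j \<ge> 2 \<Longrightarrow> (E ^^ j) v v"
proof (induction j rule: less_induct)
  case (less j)
  show ?case
  proof (cases "j = 2 \<or> j = 3")
    case True then show ?thesis using assms by auto
  next
    case False
    then have "j - 2 \<ge> 2" "j - 2 < j" using less.prems by auto
    then have "(E ^^ (j - 2)) v v" using less.IH by blast
    then have "(E ^^ ((j - 2) + 2)) v v" unfolding relpowp_add using assms(1) by (rule relcomppI)
    moreover have "(j - 2) + 2 = j" using less.prems by simp
    ultimately show ?thesis by metis
  qed
qed

lemma long_walks:
  assumes "(E ^^ n) u v" "\<forall>j\<ge>2. (E ^^ j) v v" "M \<ge> n + 2"
  shows "(E ^^ M) u v"
proof -
  have "(E ^^ (M - n)) v v" using assms(2,3) by auto
  then have "(E ^^ (n + (M - n))) u v" unfolding relpowp_add using assms(1) by (intro relcomppI)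
  moreover have "n + (M - n) = M" using assms(3) by simp
  ultimately show ?thesis by simp
qed

lemma pv_conn:
  assumes g: "graph V E" and cn: "connected_graph V E"
    and tri: "\<forall>v\<in>V. \<forall>j\<ge>2. (E ^^ j) v v"
  shows "rconn (power_verts V m) (power_edges E m)"
  unfolding rconn_def
proof (intro ballI)
  fix x y assume x: "x \<in> power_verts V m" and y: "y \<in> power_verts V m"
  have xV: "x j \<in> V" "y j \<in> V" if "j < m" for j using x y that unfolding power_verts_def by auto
  have ex: "\<forall>j. \<exists>n. j < m \<longrightarrow> (E ^^ n) (x j) (y j)"
  proof
    fix j show "\<exists>n. j < m \<longrightarrow> (E ^^ n) (x j) (y j)"
    proof (cases "j < m")
      case True
      then have "E\<^sup>*\<^sup>* (x j) (y j)" using cn xV unfolding connected_graph_def by blast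
      then show ?thesis using rtranclp_imp_relpowp by metis
    qed auto
  qed
  obtain N where N: "\<forall>j. j < m \<longrightarrow> (E ^^ N j) (x j) (y j)" using choice[OF ex] by blast
  define M where "M = (\<Sum>j<m. N j) + 2"
  have walkM: "(E ^^ M) (x j) (y j)" if j: "j < m" for j
  proof (rule long_walks[OF N[rule_format, OF j]])
    show "\<forall>ja\<ge>2. (E ^^ ja) (y j) (y j)" using tri xV[OF j] by blast
    have "N j \<le> (\<Sum>j<m. N j)" using j by (intro member_le_sum) auto
    then show "N j + 2 \<le> M" unfolding M_def by simp
  qed
  have ex2: "\<forall>j. \<exists>f. j < m \<longrightarrow> (f 0 = x j \<and> f M = y j \<and> (\<forall>i<M. E (f i) (f (Suc i))))"
    using walkM relpowp_fun_conv by metis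
  obtain W where W: "\<forall>j. j < m \<longrightarrow> (W j 0 = x j \<and> W j M = y j \<and> (\<forall>i<M. E (W j i) (W j (Suc i))))"
    using choice[OF ex2] by blast
  define Wp where "Wp i = (\<lambda>j. if j < m then W j i else undefined)" for i
  have Wmem: "Wp i \<in> power_verts V m" if "i \<le> M" for i
  proof -
    have "W j i \<in> V" if j: "j < m" for j
    proof (cases "i = M")
      case True then show ?thesis using W xV j by auto
    next
      case False then have "i < M" using \<open>i \<le> M\<close> by simp
      then have "E (W j i) (W j (Suc i))" using W j by blast
      then show ?thesis using g unfolding graph_def by blast
    qed
    then show ?thesis unfolding Wp_def power_verts_def by (auto simp: PiE_iff extensional_def)
  qed
  have ext: "z j = undefined" if "z \<in> power_verts V m" "\<not> j < m" for z j
    using that unfolding power_verts_def by (auto simp: PiE_iff extensional_def)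
  have W0: "Wp 0 = x" unfolding Wp_def using W ext[OF x] by (auto simp: fun_eq_iff)
  have WM: "Wp M = y" unfolding Wp_def using W ext[OF y] by (auto simp: fun_eq_iff)
  have "((\<lambda>a b. a \<in> power_verts V m \<and> b \<in> power_verts V m \<and> power_edges E m a b) ^^ M) x y"
    unfolding relpowp_fun_conv
  proof (intro exI[of _ Wp] conjI allI impI)
    show "Wp 0 = x" by (rule W0)
    show "Wp M = y" by (rule WM)
    fix i assume i: "i < M"
    show "Wp i \<in> power_verts V m" using Wmem i by simp
    show "Wp (Suc i) \<in> power_verts V m" using Wmem i by simp
    show "power_edges E m (Wp i) (Wp (Suc i))" unfolding power_edges_def Wp_def using W i by auto
  qed
  then show "(\<lambda>a b. a \<in> power_verts V m \<and> b \<in> power_verts V m \<and> power_edges E m a b)\<^sup>*\<^sup>* x y"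
    by (rule relpowp_imp_rtranclp)
qed

lemma two_other:
  assumes "3 \<le> (k::nat)"
  shows "\<exists>t<k. t \<noteq> a \<and> t \<noteq> b"
  by (rule exI[of _ "if 0 \<noteq> a \<and> 0 \<noteq> b then 0 else if 1 \<noteq> a \<and> 1 \<noteq> b then 1 else 2"]) (use assms in auto)

lemma main_ind:
  fixes V :: "'a set" and E k
  assumes k3: "3 \<le> k" and cl: "\<forall>v\<in>V. \<exists>p s. s < k \<and> p s = v \<and> iclq V E k p"
    and g: "graph V E" and cn: "connected_graph V E"
  shows "k_coloring (power_verts V (Suc m)) (power_edges E (Suc m)) k \<Phi> \<Longrightarrow> trivial_power_coloring V E (Suc m) \<Phi>"
proof (induction m arbitrary: \<Phi>)
  case 0
  define \<phi> where "\<phi> a = \<Phi> ((\<lambda>_. undefined)(0 := a))" for a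
  have e0: "(\<lambda>_. undefined) \<in> power_verts V 0" unfolding power_verts_def by simp
  have "proper_coloring V E \<phi>" unfolding proper_coloring_def
  proof (intro ballI impI)
    fix u v assume uv: "u \<in> V" "v \<in> V" "E u v"
    have "power_edges E 0 (\<lambda>_. undefined) (\<lambda>_. undefined)" unfolding power_edges_def by simp
    then have "power_edges E (Suc 0) ((\<lambda>_. undefined)(0 := u)) ((\<lambda>_. undefined)(0 := v))"
      using upd_pe uv(3) by fastforce
    moreover have "(\<lambda>_. undefined)(0 := u) \<in> power_verts V (Suc 0)" "(\<lambda>_. undefined)(0 := v) \<in> power_verts V (Suc 0)"
      using upd_pv[OF e0] uv by auto
    ultimately show "\<phi> u \<noteq> \<phi> v" using "0.prems" unfolding \<phi>_def k_coloring_def proper_coloring_def by blast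
  qed
  moreover have "\<Phi> x = \<phi> (x 0)" if x: "x \<in> power_verts V (Suc 0)" for x
  proof -
    have "x(0 := undefined) \<in> power_verts V 0" using restr_pv[OF x] .
    then have "x(0 := undefined) = (\<lambda>_. undefined)" unfolding power_verts_def by simp
    then have "x = (\<lambda>_. undefined)(0 := x 0)" by (metis restr_eq)
    then show ?thesis unfolding \<phi>_def by metis
  qed
  ultimately show ?case unfolding trivial_power_coloring_def by auto
next
  case (Suc m)
  let ?n = "Suc m"
  note kc = Suc.prems
  have k2: "2 \<le> k" using k3 by simp
  have kpos: "0 < k" using k3 by simp
  have rng: "\<Phi> x < k" if "x \<in> power_verts V (Suc ?n)" for x using kc that unfolding k_coloring_def by blast
  have prpP: "\<Phi> x \<noteq> \<Phi> y" if "x \<in> power_verts V (Suc ?n)" "y \<in> power_verts V (Suc ?n)" "power_edges E (Suc ?n) x y" for x y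
    using kc that unfolding k_coloring_def proper_coloring_def by blast
  obtain v0 where v0: "v0 \<in> V" using cn unfolding connected_graph_def by blast
  define a0 where "a0 = (\<lambda>j. if j < ?n then v0 else undefined)"
  have a0: "a0 \<in> power_verts V ?n" unfolding a0_def power_verts_def using v0 by (auto simp: PiE_iff extensional_def)
  define c where "c x a = \<Phi> (x(?n := a))" for x a
  have tri: "\<forall>v\<in>V. \<forall>j\<ge>2. (E ^^ j) v v"
  proof (intro ballI allI impI)
    fix v and j :: nat assume v: "v \<in> V" and j: "2 \<le> j"
    obtain p s0 where p: "s0 < k" "p s0 = v" "iclq V E k p" using cl v by blast
    obtain s1 where s1: "s1 < k" "s1 \<noteq> s0" using other_idx[OF k2] by blast
    obtain s2 where s2: "s2 < k" "s2 \<noteq> s0" "s2 \<noteq> s1" using two_other[OF k3] by blast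
    have E1: "E v (p s1)" "E (p s1) v" "E (p s1) (p s2)" "E (p s2) v"
      using p s1 s2 unfolding iclq_def by metis+
    have "(E ^^ 2) v v" unfolding numeral_2_eq_2
      by (rule relpowp_Suc_I[OF relpowp_Suc_I[OF relpowp_0_I[of E v] E1(1)] E1(2)])
    moreover have "(E ^^ 3) v v" unfolding numeral_3_eq_3
      by (rule relpowp_Suc_I[OF relpowp_Suc_I[OF relpowp_Suc_I[OF relpowp_0_I[of E v] E1(1)] E1(3)] E1(4)])
    ultimately show "(E ^^ j) v v" by (rule closed_walks[OF _ _ j])
  qed
  have TF: "(\<forall>a\<in>power_verts V ?n. \<forall>b\<in>V. c a b = c a v0) \<or> (\<forall>a\<in>power_verts V ?n. \<forall>b\<in>V. c a b = c a0 b)"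
  proof (rule two_factor[where VA="power_verts V (Suc m)" and VB=V and EA="power_edges E (Suc m)" and EB=E and c=c and ?a0.0=a0 and ?b0.0=v0 and k=k, OF k2])
    show "c a b < k" if "a \<in> power_verts V ?n" "b \<in> V" for a b
      unfolding c_def by (rule rng[OF upd_pv[OF that]])
    show "c a b \<noteq> c a' b'" if "a \<in> power_verts V ?n" "a' \<in> power_verts V ?n" "b \<in> V" "b' \<in> V"
      "power_edges E ?n a a'" "E b b'" for a a' b b'
      unfolding c_def by (rule prpP[OF upd_pv[OF that(1,3)] upd_pv[OF that(2,4)] upd_pe[OF that(5,6)]])
    show "\<exists>p s. s < k \<and> p s = a \<and> iclq (power_verts V ?n) (power_edges E ?n) k p"
      if "a \<in> power_verts V ?n" for a using pv_clique[OF cl that kpos] .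
    show "\<exists>q t. t < k \<and> q t = b \<and> iclq V E k q" if "b \<in> V" for b using cl that by blast
    show "rconn (power_verts V ?n) (power_edges E ?n)" using pv_conn[OF g cn tri] .
    show "rconn V E" using rconn_G[OF g cn] .
    show "a0 \<in> power_verts V ?n" by (rule a0)
    show "v0 \<in> V" by (rule v0)
  qed
  have decomp: "\<Phi> x = c (x(?n := undefined)) (x ?n)" for x
    unfolding c_def by simp
  have xn: "x ?n \<in> V" if "x \<in> power_verts V (Suc ?n)" for x
    using that unfolding power_verts_def by auto
  from TF show ?case
  proof
    assume L: "\<forall>a\<in>power_verts V ?n. \<forall>b\<in>V. c a b = c a v0"
    define \<psi> where "\<psi> x = c x v0" for x
    obtain p s0 where p: "s0 < k" "p s0 = v0" "iclq V E k p" using cl v0 by blast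
    obtain s1 where s1: "s1 < k" "s1 \<noteq> s0" using other_idx[OF k2] by blast
    have w: "E v0 (p s1)" "p s1 \<in> V" using p s1 unfolding iclq_def by metis+
    have "k_coloring (power_verts V ?n) (power_edges E ?n) k \<psi>"
      unfolding k_coloring_def proper_coloring_def
    proof (intro conjI ballI impI)
      fix x y assume xy: "x \<in> power_verts V ?n" "y \<in> power_verts V ?n" "power_edges E ?n x y"
      have "c x v0 \<noteq> c y (p s1)" unfolding c_def by (rule prpP[OF upd_pv[OF xy(1) v0] upd_pv[OF xy(2) w(2)] upd_pe[OF xy(3) w(1)]])
      moreover have "c y (p s1) = c y v0" using L xy(2) w(2) by blast
      ultimately show "\<psi> x \<noteq> \<psi> y" unfolding \<psi>_def by simp
    next
      fix x assume "x \<in> power_verts V ?n"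
      then show "\<psi> x < k" unfolding \<psi>_def c_def by (rule rng[OF upd_pv[OF _ v0]])
    qed
    then obtain i \<phi> where i: "i < ?n" "proper_coloring V E \<phi>" "\<forall>x\<in>power_verts V ?n. \<psi> x = \<phi> (x i)"
      using Suc.IH unfolding trivial_power_coloring_def by blast
    have "\<Phi> x = \<phi> (x i)" if x: "x \<in> power_verts V (Suc ?n)" for x
    proof -
      have r: "x(?n := undefined) \<in> power_verts V ?n" using restr_pv[OF x] .
      have "\<Phi> x = c (x(?n := undefined)) v0" using decomp[of x] L r xn[OF x] by metis
      also have "\<dots> = \<phi> ((x(?n := undefined)) i)" using i(3) r unfolding \<psi>_def by blast
      also have "\<dots> = \<phi> (x i)" using i(1) by simp
      finally show ?thesis .
    qed
    then show "trivial_power_coloring V E (Suc ?n) \<Phi>"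
      unfolding trivial_power_coloring_def using i(1,2) less_SucI by blast
  next
    assume R: "\<forall>a\<in>power_verts V ?n. \<forall>b\<in>V. c a b = c a0 b"
    define \<phi> where "\<phi> b = c a0 b" for b
    obtain q t0 where q: "t0 < k" "q t0 = a0" "iclq (power_verts V ?n) (power_edges E ?n) k q"
      using pv_clique[OF cl a0 kpos] by blast
    obtain t1 where t1: "t1 < k" "t1 \<noteq> t0" using other_idx[OF k2] by blast
    have y: "power_edges E ?n a0 (q t1)" "q t1 \<in> power_verts V ?n" using q t1 unfolding iclq_def by metis+
    have "proper_coloring V E \<phi>" unfolding proper_coloring_def
    proof (intro ballI impI)
      fix u v assume uv: "u \<in> V" "v \<in> V" "E u v"
      have "c a0 u \<noteq> c (q t1) v" unfolding c_def by (rule prpP[OF upd_pv[OF a0 uv(1)] upd_pv[OF y(2) uv(2)] upd_pe[OF y(1) uv(3)]])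
      moreover have "c (q t1) v = c a0 v" using R y(2) uv(2) by blast
      ultimately show "\<phi> u \<noteq> \<phi> v" unfolding \<phi>_def by simp
    qed
    moreover have "\<Phi> x = \<phi> (x ?n)" if x: "x \<in> power_verts V (Suc ?n)" for x
      using decomp[of x] R restr_pv[OF x] xn[OF x] unfolding \<phi>_def by metis
    ultimately show "trivial_power_coloring V E (Suc ?n) \<Phi>"
      unfolding trivial_power_coloring_def by blast
  qed
qed

theorem mainTheorem11:
  fixes V :: "'a set" and E :: "'a \<Rightarrow> 'a \<Rightarrow> bool"
  assumes "graph V E" and "finite V" and "connected_graph V E"
    and "weakly_cliqued V E" and "chromatic_number V E \<ge> 3"
  shows "trivially_power_colorable V E"
  unfolding trivially_power_colorable_def
proof (intro allI impI)
  fix n \<Phi> assume n: "1 \<le> n"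
    and kc: "k_coloring (power_verts V n) (power_edges E n) (chromatic_number V E) \<Phi>"
  obtain m where m: "n = Suc m" using n by (cases n) auto
  have cl: "\<forall>v\<in>V. \<exists>p s. s < chromatic_number V E \<and> p s = v \<and> iclq V E (chromatic_number V E) p"
    using clique_G[OF assms(4)] by blast
  show "trivial_power_coloring V E n \<Phi>"
    using main_ind[OF assms(5) cl assms(1,3)] kc m by blast
qed

end
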